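(* Let $p$ be an odd prime, $q\in\mathbb{C}_p$ with $|q-1|_p<1$, $\alpha\in\mathbb{N}\cup\{0\}$, $h\in\mathbb{N}$. For every integer $n>1$, \[ \widetilde{G}_{n,q}^{(\alpha,h)}(2)=nq^{-h}[2]_q+q^{-2h}\,\widetilde{G}_{n,q}^{(\alpha,h)}. \]
   Context: For $x\in\mathbb{Z}_p$ write $[x]_q=\frac{1-q^x}{1-q}$. For a uniformly differentiable $f:\mathbb{Z}_p\to\mathbb{C}_p$, the fermionic $p$-adic $q$-integral is $\int_{\mathbb{Z}_p}f(\xi)\,d\mu_{-q}(\xi)=\lim_{N\to\infty}\frac{1}{[p^N]_{-q}}\sum_{\xi=0}^{p^N-1}f(\xi)(-q)^{\xi}$, with $[p^N]_{-q}=\frac{1+q^{p^N}}{1+q}$. The $(h,q)$-Genocchi polynomials with weight $\alpha$ are defined for $n\ge0$, $x\in\mathbb{Z}_p$ by $\frac{\widetilde{G}_{n+1,q}^{(\alpha,h)}(x)}{n+1}=\int_{\mathbb{Z}_p}q^{(h-1)\xi}[x+\xi]_{q^{\alpha}}^n\,d\mu_{-q}(\xi)$; the numbers are $\widetilde{G}_{n,q}^{(\alpha,h)}=\widetilde{G}_{n,q}^{(\alpha,h)}(0)$, with $\widetilde{G}_{0,q}^{(\alpha,h)}=0$. *)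

theory Defs
  imports Complex_Main "HOL-Computational_Algebra.Primes"
begin

text \<open>We model C_p
  by an arbitrary field of characteristic 0 carrying an absolute value absv that is
  non-archimedean, restricts to the p-adic absolute value on the rationals
  (absv p = 1/p), is complete and is algebraically closed.  C_p is such a field.\<close>

definition abs_lim :: "('a::field_char_0 \<Rightarrow> real) \<Rightarrow> (nat \<Rightarrow> 'a) \<Rightarrow> 'a \<Rightarrow> bool" where
  "abs_lim absv s L \<longleftrightarrow> (\<forall>e>0. \<exists>N0. \<forall>N\<ge>N0. absv (s N - L) < e)"

definition Cp_like :: "('a::field_char_0 \<Rightarrow> real) \<Rightarrow> nat \<Rightarrow> bool" where
  "Cp_like absv p \<longleftrightarrow>
     (\<forall>x. absv x \<ge> 0) \<and> (\<forall>x. absv x = 0 \<longleftrightarrow> x = 0) \<and>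
     (\<forall>x y. absv (x * y) = absv x * absv y) \<and>
     (\<forall>x y. absv (x + y) \<le> max (absv x) (absv y)) \<and>
     absv (of_nat p) = 1 / real p \<and>
     (\<forall>s. (\<forall>e>0. \<exists>N0. \<forall>m\<ge>N0. \<forall>n\<ge>N0. absv (s m - s n) < e) \<longrightarrow> (\<exists>L. abs_lim absv s L)) \<and>
     (\<forall>n::nat. \<forall>c::nat \<Rightarrow> 'a. n \<ge> 1 \<longrightarrow> (\<exists>x. x ^ n + (\<Sum>i<n. c i * x ^ i) = 0))"

definition qnum :: "'a::field_char_0 \<Rightarrow> int \<Rightarrow> 'a" where
  "qnum q x = (if q = 1 then of_int x else (1 - q powi x) / (1 - q))"

text \<open>Fermionic p-adic q-integral; only the values of f at nonnegative integers
  enter the defining limit.\<close>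
definition ferm_int :: "('a::field_char_0 \<Rightarrow> real) \<Rightarrow> nat \<Rightarrow> 'a \<Rightarrow> (nat \<Rightarrow> 'a) \<Rightarrow> 'a" where
  "ferm_int absv p q f = (THE L. abs_lim absv
      (\<lambda>N. (1 / ((1 + q ^ (p ^ N)) / (1 + q))) * (\<Sum>\<xi><p ^ N. f \<xi> * (- q) ^ \<xi>)) L)"

definition genocchi :: "('a::field_char_0 \<Rightarrow> real) \<Rightarrow> nat \<Rightarrow> 'a \<Rightarrow> nat \<Rightarrow> nat \<Rightarrow> nat \<Rightarrow> int \<Rightarrow> 'a" where
  "genocchi absv p q \<alpha> h n x =
     (if n = 0 then 0 else
        of_nat n * ferm_int absv p q
          (\<lambda>\<xi>. q ^ ((h - 1) * \<xi>) * qnum (q ^ \<alpha>) (x + int \<xi>) ^ (n - 1)))"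

end

theory Submission imports Defs begin

definition Q :: "'a::field_char_0 \<Rightarrow> nat \<Rightarrow> 'a" where "Q r m = (\<Sum>i<m. r ^ i)"

definition Fg :: "'a::field_char_0 \<Rightarrow> nat \<Rightarrow> nat \<Rightarrow> nat \<Rightarrow> nat \<Rightarrow> nat \<Rightarrow> 'a" where
  "Fg q \<alpha> h n x \<xi> = q ^ ((h - 1) * \<xi>) * qnum (q ^ \<alpha>) (int x + int \<xi>) ^ (n - 1)"

lemma qnum_Q: "qnum r (int m) = Q r m"
proof (cases "r = 1")
  case True then show ?thesis by (simp add: qnum_def Q_def)
next
  case False
  have "1 - r ^ m = (1 - r) * Q r m" unfolding Q_def by (rule one_diff_power_eq)
  then show ?thesis using False by (simp add: qnum_def field_simps)
qed

lemma F_Q: "Fg q \<alpha> h n x \<xi> = q ^ ((h - 1) * \<xi>) * Q (q ^ \<alpha>) (x + \<xi>) ^ (n - 1)"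
  unfolding Fg_def using qnum_Q[of "q ^ \<alpha>" "x + \<xi>"] by simp

lemma F_shift: "Fg q \<alpha> h n x (Suc \<xi>) = q ^ (h - 1) * Fg q \<alpha> h n (Suc x) \<xi>"
  unfolding F_Q by (simp add: power_add mult_Suc_right)

lemma genocchi_F: "n \<noteq> 0 \<Longrightarrow> genocchi absv p q \<alpha> h n (int x) = of_nat n * ferm_int absv p q (Fg q \<alpha> h n x)"
  unfolding genocchi_def Fg_def by simp

locale cpl =
  fixes absv :: "'a::field_char_0 \<Rightarrow> real" and p :: nat and q :: 'a
  assumes cp: "Cp_like absv p" and pr: "prime p" and od: "odd p" and q1: "absv (q - 1) < 1"
begin

lemma nn: "absv x \<ge> 0" using cp unfolding Cp_like_def by blast
lemma zr: "absv x = 0 \<longleftrightarrow> x = 0" using cp unfolding Cp_like_def by blast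
lemma ml: "absv (x * y) = absv x * absv y" using cp unfolding Cp_like_def by blast
lemma ul: "absv (x + y) \<le> max (absv x) (absv y)" using cp unfolding Cp_like_def by blast
lemma ap: "absv (of_nat p) = 1 / real p" using cp unfolding Cp_like_def by blast
lemma cpl: "(\<forall>e>0. \<exists>N0. \<forall>m\<ge>N0. \<forall>n\<ge>N0. absv (s m - s n) < e) \<Longrightarrow> (\<exists>L. abs_lim absv s L)"
  using cp unfolding Cp_like_def by blast

lemma a0[simp]: "absv 0 = 0" using zr by simp

lemma a1: "absv 1 = 1"
proof -
  have "absv 1 = absv 1 * absv 1" using ml[of 1 1] by simp
  moreover have "absv 1 \<noteq> 0" using zr by simp
  ultimately show ?thesis by (metis mult_cancel_right1)
qed

lemma aneg: "absv (- x) = absv x"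
proof -
  have "absv (-1) * absv (-1) = 1" using ml[of "-1" "-1"] a1 by simp
  hence "absv (-1) = 1" using nn[of "-1"]
    by (metis abs_of_nonneg abs_square_eq_1 power2_eq_square)
  thus ?thesis using ml[of "-1" x] by simp
qed

lemma apow: "absv (x ^ n) = absv x ^ n"
  by (induction n) (simp_all add: a1 ml)

lemma adiff: "absv (x - y) \<le> max (absv x) (absv y)"
  using ul[of x "-y"] aneg[of y] by simp

lemma asum: "finite A \<Longrightarrow> (\<And>i. i \<in> A \<Longrightarrow> absv (g i) \<le> B) \<Longrightarrow> 0 \<le> B \<Longrightarrow> absv (sum g A) \<le> B"
proof (induction A rule: finite_induct)
  case empty then show ?case using zr by simp
next
  case (insert x F)
  have "absv (g x) \<le> B" using insert by auto
  moreover have "absv (sum g F) \<le> B" using insert by auto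
  ultimately show ?case using ul[of "g x" "sum g F"] insert(1,2) by simp
qed

lemma anat: "absv (of_nat k) \<le> 1"
proof (induction k)
  case 0 then show ?case using zr by simp
next
  case (Suc k) then show ?case using ul[of 1 "of_nat k"] a1 by simp
qed

lemma ainv: "absv (inverse x) = inverse (absv x)"
proof (cases "x = 0")
  case True then show ?thesis using zr by simp
next
  case False
  have "absv x * absv (inverse x) = 1" using ml[of x "inverse x"] False a1 by simp
  then show ?thesis by (metis inverse_unique)
qed

lemma adiv: "absv (x / y) = absv x / absv y"
  by (simp add: divide_inverse ml ainv)

lemma iso: "absv a < absv b \<Longrightarrow> absv (a + b) = absv b"
proof -
  assume h: "absv a < absv b"
  have "absv (a + b) \<le> absv b" using ul[of a b] h by simp
  moreover have "absv b \<le> max (absv (a+b)) (absv a)" using adiff[of "a+b" a] by simp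
  ultimately show ?thesis using h by linarith
qed

lemma p1: "p > 1" using pr prime_gt_1_nat by blast

lemma a2: "absv (2::'a) = 1"
proof -
  obtain m where m: "p = 2*m+1" using od oddE by blast
  have e: "(1::'a) = of_nat p - 2 * of_nat m" using m by simp
  have "absv (1::'a) \<le> max (absv (of_nat p::'a)) (absv (2 * of_nat m::'a))"
    using e adiff by metis
  moreover have "absv (of_nat p::'a) < 1" using ap p1 by simp
  moreover have "absv (2 * of_nat m::'a) \<le> absv 2"
    using ml[of 2 "of_nat m"] anat[of m] nn[of 2]
    by (simp add: mult_left_le)
  moreover have "absv (2::'a) \<le> 1" using anat[of 2] by simp
  ultimately show ?thesis using a1 by linarith
qed

lemma aq: "absv q = 1"
  using iso[of "q - 1" 1] q1 a1 by simp

lemma qnz: "q \<noteq> 0" using aq zr by auto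

definition cc where "cc = max (1 / real p) (absv (q - 1))"

lemma cc0: "0 \<le> cc" using nn[of "q-1"] unfolding cc_def by auto
lemma cc1: "cc < 1" using p1 q1 unfolding cc_def by auto

lemma Q_add: "Q r (m + k) = Q r m + r ^ m * Q r k"
  unfolding Q_def by (induction k) (simp_all add: algebra_simps power_add)

lemma Q_mult: "Q r (a * b) = Q r a * Q (r ^ a) b"
proof (induction b)
  case 0 then show ?case by (simp add: Q_def)
next
  case (Suc b)
  have "Q r (a * Suc b) = Q r (a * b + a)" by (simp add: algebra_simps)
  also have "\<dots> = Q r (a*b) + r^(a*b) * Q r a" by (rule Q_add)
  also have "\<dots> = Q r a * Q (r ^ a) (Suc b)" using Suc
    by (simp add: Q_def power_mult algebra_simps)
  finally show ?case .
qed

lemma pm1: "r ^ m - 1 = (r - 1) * Q r m"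
  unfolding Q_def by (rule power_diff_1_eq)

lemma Q_bound: "absv r = 1 \<Longrightarrow> absv (Q r m) \<le> 1"
  unfolding Q_def by (rule asum) (auto simp: apow)

lemma pm1_bound: "absv r = 1 \<Longrightarrow> absv (r ^ m - 1) \<le> absv (r - 1)"
  using pm1[of r m] ml[of "r - 1" "Q r m"] Q_bound[of r m] nn[of "r - 1"]
  by (simp add: mult_left_le)

lemma Q_p_bound: assumes "absv r = 1" shows "absv (Q r p) \<le> max (1 / real p) (absv (r - 1))"
proof -
  have "Q r p = of_nat p + (\<Sum>i<p. r ^ i - 1)"
    unfolding Q_def by (simp add: sum_subtractf)
  moreover have "absv (\<Sum>i<p. r ^ i - 1) \<le> absv (r - 1)"
    by (rule asum) (auto simp: pm1_bound assms nn)
  ultimately show ?thesis using ul[of "of_nat p" "\<Sum>i<p. r ^ i - 1"] ap by auto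
qed

lemma Q_decay: assumes "absv r = 1" "absv (r - 1) \<le> absv (q - 1)"
  shows "absv (Q r (p ^ N)) \<le> cc ^ N"
proof (induction N)
  case 0 then show ?case by (simp add: Q_def a1)
next
  case (Suc N)
  have r1: "absv (r ^ (p ^ N)) = 1" using assms by (simp add: apow)
  have r2: "absv (r ^ (p ^ N) - 1) \<le> absv (q - 1)" using pm1_bound[OF assms(1)] assms(2) order_trans by blast
  have "Q r (p ^ Suc N) = Q r (p ^ N) * Q (r ^ (p ^ N)) p" using Q_mult[of r "p^N" p] by (simp add: mult.commute)
  hence "absv (Q r (p ^ Suc N)) = absv (Q r (p ^ N)) * absv (Q (r ^ (p ^ N)) p)" by (simp add: ml)
  also have "\<dots> \<le> cc ^ N * cc"
    apply (rule mult_mono)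
    using Suc apply simp
    using Q_p_bound[OF r1] r2 apply (auto simp: cc_def)[1]
    using cc0 apply simp
    using nn by simp
  finally show ?case by (simp add: mult.commute)
qed

lemma mle: "absv x \<le> 1 \<Longrightarrow> absv y \<le> B \<Longrightarrow> absv (x * y) \<le> B"
  using ml[of x y] nn[of x] nn[of y]
  by (metis dual_order.trans mult_le_cancel_right1 mult_left_le_one_le mult.commute)

lemma powdiff: assumes "absv x \<le> 1" "absv y \<le> 1" shows "absv (x ^ k - y ^ k) \<le> absv (x - y)"
proof -
  have "absv (\<Sum>i<k. y^(k - Suc i) * x^i) \<le> 1"
    apply (rule asum)
    using assms by (auto simp: ml apow power_le_one mult_le_one nn)
  then show ?thesis using power_diff_sumr2[of x k y] mle ml
    by (metis mult.commute order_refl)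
qed

lemma fbound: assumes r: "absv r = 1" "absv (r - 1) \<le> absv (q - 1)"
  shows "absv (q ^ (a * (\<xi> + j * p ^ N)) * Q r (m0 + (\<xi> + j * p ^ N)) ^ k
              - q ^ (a * \<xi>) * Q r (m0 + \<xi>) ^ k) \<le> cc ^ N"
proof -
  define M where "M = p ^ N"
  define A where "A = q ^ (a * \<xi>)"
  define A' where "A' = q ^ (a * (\<xi> + j * M))"
  define B where "B = Q r (m0 + \<xi>)"
  define B' where "B' = Q r (m0 + (\<xi> + j * M))"
  have cN: "0 \<le> cc ^ N" using cc0 by simp
  have A1: "absv A = 1" "absv A' = 1" unfolding A_def A'_def by (simp_all add: apow aq)
  have B1: "absv B \<le> 1" "absv B' \<le> 1" unfolding B_def B'_def using Q_bound r by auto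
  have "A' - A = A * (q ^ (M * (a * j)) - 1)" unfolding A_def A'_def
    by (simp add: algebra_simps power_add)
  also have "q ^ (M * (a * j)) - 1 = (q - 1) * (Q q M * Q (q ^ M) (a * j))"
    by (simp add: pm1 Q_mult)
  finally have "absv (A' - A) = absv (q - 1) * (absv (Q q M) * absv (Q (q ^ M) (a * j)))"
    using A1 by (simp add: ml)
  moreover have "absv (Q q M) \<le> cc ^ N" unfolding M_def by (rule Q_decay) (auto simp: aq)
  moreover have "absv (Q (q ^ M) (a * j)) \<le> 1" by (rule Q_bound) (simp add: apow aq)
  moreover have "absv (q - 1) \<le> 1" using q1 by simp
  ultimately have dA: "absv (A' - A) \<le> cc ^ N"
    by (metis mle ml mult.commute)
  have "B' - B = r ^ (m0 + \<xi>) * (Q r M * Q (r ^ M) j)" unfolding B_def B'_def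
    using Q_add[of r "m0 + \<xi>" "j * M"] Q_mult[of r M j]
    by (simp add: algebra_simps)
  moreover have "absv (Q r M) \<le> cc ^ N" unfolding M_def by (rule Q_decay[OF r])
  moreover have "absv (Q (r ^ M) j) \<le> 1" by (rule Q_bound) (simp add: apow r)
  moreover have "absv (r ^ (m0 + \<xi>)) \<le> 1" by (simp add: apow r)
  ultimately have dB: "absv (B' - B) \<le> cc ^ N"
    by (metis mle mult.commute)
  have dBk: "absv (B' ^ k - B ^ k) \<le> cc ^ N" using powdiff[OF B1(2) B1(1), of k] dB by linarith
  have "A' * B' ^ k - A * B ^ k = A' * (B' ^ k - B ^ k) + (A' - A) * B ^ k"
    by (simp add: algebra_simps)
  moreover have "absv (A' * (B' ^ k - B ^ k)) \<le> cc ^ N" using mle A1 dBk by simp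
  moreover have "absv ((A' - A) * B ^ k) \<le> cc ^ N" using mle[of "B ^ k"] dA B1
    by (metis apow mult.commute power_le_one nn)
  ultimately have "absv (A' * B' ^ k - A * B ^ k) \<le> cc ^ N"
    using ul by (metis max.bounded_iff order_trans)
  then show ?thesis unfolding A_def A'_def B_def B'_def M_def .
qed

lemma split_sum: "(\<Sum>i<n*M. g i) = (\<Sum>j<n. \<Sum>\<xi><M. g (\<xi> + j * (M::nat)))"
proof -
  have "\<And>m. sum g {m*M..<m*M+M} = (\<Sum>\<xi><M. g (\<xi> + m*M))"
    using sum.shift_bounds_nat_ivl[of g 0 "m*M" M for m] by (simp add: atLeast0LessThan add.commute)
  then show ?thesis using sum.nat_group[of g M n] by simp
qed

lemma a1pq: "absv (1 + q ^ k) = 1"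
proof -
  have "absv (q ^ k - 1) < absv 2" using pm1_bound[OF aq, of k] q1 a2 by simp
  then have "absv ((q ^ k - 1) + 2) = 1" using iso a2 by metis
  moreover have "(q ^ k - 1) + 2 = 1 + q ^ k" by simp
  ultimately show ?thesis by simp
qed

lemma pqnz: "1 + q ^ k \<noteq> 0" using a1pq[of k] by auto

lemma podd: "odd (p ^ N)" using od by simp

definition Sq :: "(nat \<Rightarrow> 'a) \<Rightarrow> nat \<Rightarrow> 'a" where
  "Sq f = (\<lambda>N. (1 / ((1 + q ^ (p ^ N)) / (1 + q))) * (\<Sum>\<xi><p ^ N. f \<xi> * (- q) ^ \<xi>))"

lemma ferm_Sq: "ferm_int absv p q f = (THE L. abs_lim absv (Sq f) L)"
  unfolding ferm_int_def Sq_def by simp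

definition H :: "(nat \<Rightarrow> 'a) \<Rightarrow> bool" where
  "H f \<longleftrightarrow> (\<forall>N \<xi> j. absv (f (\<xi> + j * p ^ N) - f \<xi>) \<le> cc ^ N)"

lemma Sdiff: assumes "H f" shows "absv (Sq f (Suc N) - Sq f N) \<le> cc ^ N"
proof -
  define M where "M = p ^ N"
  define T where "T = (\<Sum>\<xi><M. f \<xi> * (- q) ^ \<xi>)"
  define G where "G = (\<Sum>j<p. (- q) ^ (j * M))"
  define E where "E = (\<Sum>j<p. \<Sum>\<xi><M. (f (\<xi> + j * M) - f \<xi>) * (- q) ^ (\<xi> + j * M))"
  define D where "D = (1 + q ^ M) / (1 + q)"
  define D' where "D' = (1 + q ^ (M * p)) / (1 + q)"
  have pS: "p ^ Suc N = p * M" unfolding M_def by simp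
  have T': "(\<Sum>\<xi><p ^ Suc N. f \<xi> * (- q) ^ \<xi>) = T * G + E"
  proof -
    have "(\<Sum>\<xi><p ^ Suc N. f \<xi> * (- q) ^ \<xi>) = (\<Sum>j<p. \<Sum>\<xi><M. f (\<xi> + j * M) * (- q) ^ (\<xi> + j * M))"
      unfolding pS by (rule split_sum)
    also have "\<dots> = (\<Sum>j<p. \<Sum>\<xi><M. f \<xi> * (- q) ^ \<xi> * (- q) ^ (j * M)
                      + (f (\<xi> + j * M) - f \<xi>) * (- q) ^ (\<xi> + j * M))"
      by (intro sum.cong refl) (simp add: algebra_simps power_add)
    also have "\<dots> = T * G + E" unfolding T_def G_def E_def
      by (simp add: sum.distrib sum_distrib_left sum_distrib_right)
    finally show ?thesis .
  qed
  have oM: "odd M" unfolding M_def using podd .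
  have GG: "(1 + q ^ M) * G = 1 + q ^ (M * p)"
  proof -
    have "G = (\<Sum>j<p. (- (q ^ M)) ^ j)" unfolding G_def
    proof (intro sum.cong refl)
      fix j
      have "(- q) ^ (j * M) = ((- q) ^ M) ^ j" by (metis power_mult mult.commute)
      also have "\<dots> = (- (q ^ M)) ^ j" using oM by simp
      finally show "(- q) ^ (j * M) = (- (q ^ M)) ^ j" .
    qed
    then have "(1 - (- (q ^ M))) * G = 1 - (- (q ^ M)) ^ p" using one_diff_power_eq by metis
    then show ?thesis using od by (simp add: power_mult)
  qed
  have Dnz: "D \<noteq> 0" unfolding D_def using pqnz[of M] pqnz[of 1] by simp
  have D'nz: "D' \<noteq> 0" unfolding D'_def using pqnz[of "M*p"] pqnz[of 1] by simp
  have DD: "D' = D * G" unfolding D'_def D_def using GG by (simp add: field_simps)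
  have Gnz: "G \<noteq> 0" using D'nz DD by auto
  have aD': "absv D' = 1" unfolding D'_def using a1pq[of "M*p"] a1pq[of 1] by (simp add: adiv)
  have "Sq f (Suc N) - Sq f N = (1 / D') * (T * G + E) - (1 / D) * T"
    unfolding Sq_def using T' by (simp add: D_def D'_def T_def M_def pS mult.commute)
  also have "\<dots> = E / D'" using DD Dnz Gnz by (simp add: field_simps)
  finally have e: "absv (Sq f (Suc N) - Sq f N) = absv E" using aD' by (simp add: adiv)
  have "absv E \<le> cc ^ N" unfolding E_def
    apply (rule asum, simp)
    apply (rule asum, simp)
    using assms unfolding H_def M_def by (auto simp: ml apow aq aneg cc0)
  then show ?thesis using e by simp
qed

lemma cauchy0: assumes "H f" "N \<le> n" shows "absv (Sq f n - Sq f N) \<le> cc ^ N"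
  using assms(2)
proof (induction n rule: dec_induct)
  case base then show ?case using cc0 by simp
next
  case (step n)
  have "cc ^ n \<le> cc ^ N" using step(1) cc0 cc1 by (simp add: power_decreasing)
  moreover have "Sq f (Suc n) - Sq f N = (Sq f (Suc n) - Sq f n) + (Sq f n - Sq f N)" by simp
  moreover have "absv (Sq f (Suc n) - Sq f n) \<le> cc ^ N"
    using Sdiff[OF assms(1), of n] calculation(1) by linarith
  moreover have "absv (Sq f n - Sq f N) \<le> cc ^ N" using step(3) .
  ultimately show ?case using ul[of "Sq f (Suc n) - Sq f n" "Sq f n - Sq f N"]
    by (simp del: diff_add_cancel)
qed

lemma conv: assumes "H f" shows "\<exists>L. abs_lim absv (Sq f) L"
proof (rule cpl, intro allI impI)
  fix e :: real assume e: "e > 0"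
  obtain N where N: "cc ^ N < e" using real_arch_pow_inv[OF e cc1] by blast
  show "\<exists>N0. \<forall>m\<ge>N0. \<forall>n\<ge>N0. absv (Sq f m - Sq f n) < e"
  proof (intro exI allI impI)
    fix m n assume "N \<le> m" "N \<le> n"
    then have "absv (Sq f m - Sq f N) \<le> cc ^ N" "absv (Sq f n - Sq f N) \<le> cc ^ N"
      using cauchy0[OF assms] by auto
    moreover have "Sq f m - Sq f n = (Sq f m - Sq f N) - (Sq f n - Sq f N)" by simp
    ultimately have "absv (Sq f m - Sq f n) \<le> cc ^ N"
      using adiff[of "Sq f m - Sq f N" "Sq f n - Sq f N"] by (simp del: diff_diff_eq2 diff_diff_eq diff_add_cancel)
    then show "absv (Sq f m - Sq f n) < e" using N by linarith
  qed
qed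

lemma uniq: assumes "abs_lim absv s a" "abs_lim absv s b" shows "a = b"
proof (rule ccontr)
  assume "a \<noteq> b"
  then have e: "absv (a - b) > 0" using zr nn[of "a-b"] by (metis eq_iff_diff_eq_0 less_eq_real_def)
  obtain N1 where N1: "\<forall>N\<ge>N1. absv (s N - a) < absv (a - b)" using assms(1) e unfolding abs_lim_def by blast
  obtain N2 where N2: "\<forall>N\<ge>N2. absv (s N - b) < absv (a - b)" using assms(2) e unfolding abs_lim_def by blast
  define N where "N = max N1 N2"
  have "absv (s N - a) < absv (a - b)" "absv (s N - b) < absv (a - b)" using N1 N2 N_def by auto
  moreover have "a - b = (s N - b) - (s N - a)" by simp
  ultimately show False using adiff[of "s N - b" "s N - a"] by (metis max_less_iff_conj not_le)
qed

lemma ferm_eq: assumes "abs_lim absv (Sq f) L" shows "ferm_int absv p q f = L"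
  unfolding ferm_Sq using assms uniq by (metis the_equality)

lemma combo: assumes "abs_lim absv s a" "abs_lim absv t b" "absv k \<le> 1"
  shows "abs_lim absv (\<lambda>N. k * s N + t N) (k * a + b)"
  unfolding abs_lim_def
proof (intro allI impI)
  fix e :: real assume e: "e > 0"
  obtain N1 where N1: "\<forall>N\<ge>N1. absv (s N - a) < e" using assms(1) e unfolding abs_lim_def by blast
  obtain N2 where N2: "\<forall>N\<ge>N2. absv (t N - b) < e" using assms(2) e unfolding abs_lim_def by blast
  show "\<exists>N0. \<forall>N\<ge>N0. absv (k * s N + t N - (k * a + b)) < e"
  proof (intro exI allI impI)
    fix N assume "max N1 N2 \<le> N"
    then have h: "absv (s N - a) < e" "absv (t N - b) < e" using N1 N2 by auto
    have "absv (k * (s N - a)) \<le> absv (s N - a)" using mle[OF assms(3), of "s N - a" "absv (s N - a)"] by simp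
    then have "absv (k * (s N - a)) < e" using h(1) by linarith
    moreover have "k * s N + t N - (k * a + b) = k * (s N - a) + (t N - b)" by (simp add: algebra_simps)
    ultimately show "absv (k * s N + t N - (k * a + b)) < e"
      using ul[of "k * (s N - a)" "t N - b"] h(2) by (metis max_less_iff_conj order_le_less_trans)
  qed
qed

lemma lim_bound: assumes "\<And>N. absv (s N - L) \<le> cc ^ N" shows "abs_lim absv s L"
  unfolding abs_lim_def
proof (intro allI impI)
  fix e :: real assume e: "e > 0"
  obtain N where N: "cc ^ N < e" using real_arch_pow_inv[OF e cc1] by blast
  show "\<exists>N0. \<forall>n\<ge>N0. absv (s n - L) < e"
  proof (intro exI allI impI)
    fix n assume "N \<le> n"
    then have "cc ^ n \<le> cc ^ N" using cc0 cc1 by (simp add: power_decreasing)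
    then show "absv (s n - L) < e" using assms[of n] N by linarith
  qed
qed

lemma shift: assumes "H f" "\<And>\<xi>. f (Suc \<xi>) = \<kappa> * g \<xi>" "absv \<kappa> \<le> 1"
  "abs_lim absv (Sq f) Lf" "abs_lim absv (Sq g) Lg"
  shows "q * \<kappa> * Lg + Lf = (1 + q) * f 0"
proof -
  have b: "absv (q * \<kappa> * Sq g N + Sq f N - (1 + q) * f 0) \<le> cc ^ N" for N
  proof -
    define M where "M = p ^ N"
    define T where "T = (\<Sum>\<xi><M. f \<xi> * (- q) ^ \<xi>)"
    define U where "U = (\<Sum>\<xi><M. f (Suc \<xi>) * (- q) ^ \<xi>)"
    have oM: "odd M" unfolding M_def using podd .
    have kU: "\<kappa> * (\<Sum>\<xi><M. g \<xi> * (- q) ^ \<xi>) = U" unfolding U_def using assms(2)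
      by (simp add: sum_distrib_left algebra_simps)
    have "(\<Sum>\<xi><Suc M. f \<xi> * (- q) ^ \<xi>) = f 0 + (\<Sum>\<xi><M. f (Suc \<xi>) * (- q) ^ Suc \<xi>)"
      using sum.lessThan_Suc_shift[of "\<lambda>\<xi>. f \<xi> * (- q) ^ \<xi>" M] by simp
    also have "(\<Sum>\<xi><M. f (Suc \<xi>) * (- q) ^ Suc \<xi>) = - q * U" unfolding U_def
      by (simp add: sum_distrib_left algebra_simps)
    finally have "T + f M * (- q) ^ M = f 0 - q * U" unfolding T_def by simp
    then have "T - f M * q ^ M = f 0 - q * U" using oM by simp
    then have qU: "q * U = f 0 + f M * q ^ M - T" by (simp add: algebra_simps)
    have nz: "1 + q ^ M \<noteq> 0" "1 + q \<noteq> 0" using pqnz[of M] pqnz[of 1] by auto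
    define W where "W = (\<Sum>\<xi><M. g \<xi> * (- q) ^ \<xi>)"
    define D where "D = (1 + q ^ M) / (1 + q)"
    have Sg: "Sq g N = (1 / D) * W" and Sf: "Sq f N = (1 / D) * T"
      unfolding Sq_def D_def W_def T_def M_def by simp_all
    have qUT: "q * U + T = f 0 + f M * q ^ M" using qU by simp
    have "q * \<kappa> * Sq g N + Sq f N = (1 / D) * (q * (\<kappa> * W) + T)"
      unfolding Sg Sf by (simp add: algebra_simps)
    also have "\<dots> = (1 + q) / (1 + q ^ M) * (f 0 + f M * q ^ M)"
      unfolding W_def kU qUT D_def by simp
    finally have "q * \<kappa> * Sq g N + Sq f N - (1 + q) * f 0
        = (1 + q) / (1 + q ^ M) * (f 0 + f M * q ^ M) - (1 + q) * f 0" by simp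
    also have "\<dots> = (1 + q) * q ^ M * (f M - f 0) / (1 + q ^ M)" using nz
      by (simp add: field_simps)
    finally have e: "absv (q * \<kappa> * Sq g N + Sq f N - (1 + q) * f 0) = absv (f M - f 0)"
      using a1pq[of M] a1pq[of 1] by (simp add: adiv ml apow aq)
    have "absv (f (0 + 1 * p ^ N) - f 0) \<le> cc ^ N" using assms(1) unfolding H_def by blast
    then show ?thesis using e M_def by simp
  qed
  have l1: "abs_lim absv (\<lambda>N. q * \<kappa> * Sq g N + Sq f N) ((1 + q) * f 0)"
    by (rule lim_bound) (use b in simp)
  have l2: "abs_lim absv (\<lambda>N. q * \<kappa> * Sq g N + Sq f N) (q * \<kappa> * Lg + Lf)"
    by (rule combo[OF assms(5,4)]) (simp add: ml aq assms(3))
  show ?thesis using uniq[OF l2 l1] .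
qed

lemma H_F: "H (Fg q \<alpha> h n x)"
  unfolding H_def
proof (intro allI)
  fix N \<xi> j
  have r: "absv (q ^ \<alpha>) = 1" "absv (q ^ \<alpha> - 1) \<le> absv (q - 1)"
    using pm1_bound[OF aq] by (auto simp: apow aq)
  show "absv (Fg q \<alpha> h n x (\<xi> + j * p ^ N) - Fg q \<alpha> h n x \<xi>) \<le> cc ^ N"
    unfolding F_Q using fbound[OF r, of "h - 1" \<xi> j N x "n - 1"] by simp
qed

lemma main: assumes "h \<ge> 1" "n > 1"
  shows "genocchi absv p q \<alpha> h n 2 =
           of_nat n * q powi (- int h) * qnum q 2
           + q powi (- (2 * int h)) * genocchi absv p q \<alpha> h n 0"
proof -
  obtain L0 where L0: "abs_lim absv (Sq (Fg q \<alpha> h n 0)) L0" using conv[OF H_F] by blast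
  obtain L1 where L1: "abs_lim absv (Sq (Fg q \<alpha> h n 1)) L1" using conv[OF H_F] by blast
  obtain L2 where L2: "abs_lim absv (Sq (Fg q \<alpha> h n 2)) L2" using conv[OF H_F] by blast
  have k: "absv (q ^ (h - 1)) \<le> 1" by (simp add: apow aq)
  have sh: "Suc (h - 1) = h" using assms(1) by simp
  have qh: "q * q ^ (h - 1) = q ^ h" using power_Suc[of q "h - 1"] unfolding sh by simp
  have e1: "q * q ^ (h - 1) * L1 + L0 = (1 + q) * Fg q \<alpha> h n 0 0"
    by (rule shift[OF H_F _ k L0 L1]) (simp add: F_shift)
  have e2: "q * q ^ (h - 1) * L2 + L1 = (1 + q) * Fg q \<alpha> h n 1 0"
    by (rule shift[OF H_F _ k L1 L2]) (simp add: F_shift numeral_2_eq_2)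
  have f0: "Fg q \<alpha> h n 0 0 = 0" unfolding F_Q using assms(2) by (simp add: Q_def)
  have f1: "Fg q \<alpha> h n 1 0 = 1" unfolding F_Q by (simp add: Q_def)
  have E1: "q ^ h * L1 + L0 = 0" using e1 f0 qh by simp
  have E2: "q ^ h * L2 + L1 = 1 + q" using e2 f1 qh by simp
  have G2: "genocchi absv p q \<alpha> h n 2 = of_nat n * L2"
    using genocchi_F[of n absv p q \<alpha> h 2] ferm_eq[OF L2] assms(2) by simp
  have G0: "genocchi absv p q \<alpha> h n 0 = of_nat n * L0"
    using genocchi_F[of n absv p q \<alpha> h 0] ferm_eq[OF L0] assms(2) by simp
  have Q2: "qnum q 2 = 1 + q" using qnum_Q[of q 2] by (simp add: Q_def numeral_2_eq_2)
  have qhnz: "q ^ h \<noteq> 0" using qnz by simp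
  have p1: "q powi (- int h) = inverse (q ^ h)" by (simp add: power_int_minus)
  have p2: "q powi (- (2 * int h)) = inverse (q ^ h) * inverse (q ^ h)"
  proof -
    have i: "2 * int h = int (2 * h)" by simp
    have "q powi (- (2 * int h)) = inverse (q powi (int (2 * h)))"
      unfolding i by (rule power_int_minus)
    also have "\<dots> = inverse (q ^ (2 * h))" by (simp only: power_int_of_nat)
    also have "q ^ (2 * h) = q ^ h * q ^ h" by (metis mult_2 power_add)
    finally show ?thesis by (simp only: inverse_mult_distrib)
  qed
  have "L2 = inverse (q ^ h) * (1 + q) + inverse (q ^ h) * inverse (q ^ h) * L0"
  proof -
    have a: "q ^ h * L1 = - L0" using E1 by (simp add: eq_neg_iff_add_eq_0)
    have b: "q ^ h * L2 = 1 + q - L1" using E2 by (simp add: eq_diff_eq)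
    have "L1 = inverse (q ^ h) * (q ^ h * L1)" using qhnz by simp
    then have "L1 = - L0 * inverse (q ^ h)" unfolding a by simp
    moreover have "L2 = inverse (q ^ h) * (q ^ h * L2)" using qhnz by simp
    then have "L2 = (1 + q - L1) * inverse (q ^ h)" unfolding b by simp
    ultimately show ?thesis by algebra
  qed
  then show ?thesis unfolding G2 G0 Q2 p1 p2 by algebra
qed

end

theorem mainTheorem3:
  fixes absv :: "'a::field_char_0 \<Rightarrow> real" and p :: nat and q :: 'a
    and \<alpha> h n :: nat
  assumes "prime p" and "odd p" and "Cp_like absv p"
    and "absv (q - 1) < 1" and "h \<ge> 1" and "n > 1"
  shows "genocchi absv p q \<alpha> h n 2 =
           of_nat n * q powi (- int h) * qnum q 2
           + q powi (- (2 * int h)) * genocchi absv p q \<alpha> h n 0"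
proof -
  interpret cpl absv p q using assms by unfold_locales auto
  show ?thesis using main assms(5,6) .
qed

end
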